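(* Let $\dot G\in\mathcal C_1\cup\mathcal C_4\cup\mathcal C_5$ be a connected, non-complete, $5$-regular and $1$ net-regular SRSG with parameters $(n,5,a,b,c)$. Then: (1) $a<3$; (2) if $a=0$, then two vertices joined by a positive edge have no common neighbours; if $b=0$, then two vertices joined by a negative edge have no common neighbours; (3) if $a=-1$, then $b\le 0$; (4) if $a=-2$, then $b\ge -1$; (5) $a>-3$; (6) $-2\le b<3$; (7) if $\dot G$ contains a balanced triangle (product of edge signs $+1$) with two negative edges, then $b\le 0$; (8) if $b=2$ or $b=-1$, then $a\le 0$; (9) if $b=-2$, then $a\ge 1$.
   Context: A signed graph $\dot G=(G,\sigma)$ is a simple graph $G$ with $\sigma:E(G)\to\{\pm1\}$; adjacency matrix $A_{\dot G}$ has entries $\sigma(v_iv_j)$ for adjacent vertices and $0$ otherwise. Degree and connectedness refer to $G$; net-degree is $d^+(v)-d^-(v)$; $\rho$ net-regular means all net-degrees equal $\rho$. $\dot G$ on $n$ vertices is an SRSG if it is neither homogeneous (all edges of one sign) complete nor edgeless and there are $r\in\mathbb N$, $a,b,c\in\mathbb Z$ with $(A^2_{\dot G})_{ii}=r$, $(A^2_{\dot G})_{ij}=a$ for positive edges $v_iv_j$, $b$ for negative edges, $c$ for distinct non-adjacent pairs; parameters $(n,r,a,b,c)$. Classes of inhomogeneous SRSGs: $\mathcal C_1$: $a=-b$ and (complete, or non-complete with $c\ne0$); $\mathcal C_4$: $a\ne-b$, non-complete, $c=0$; $\mathcal C_5$: $a\ne-b$, non-complete, $c\neq0$, $c\neq\frac{a+b}2$.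 *)

theory Defs
  imports Complex_Main
begin

text \<open>A signed graph on a finite vertex set V is given by a sign function
  sg :: 'a => 'a => int: sg u v = 1 for a positive edge, -1 for a negative
  edge, 0 for non-adjacent vertices (or u = v).  The adjacency matrix is
  (sg u v) for u, v in V.\<close>

definition signed_graph :: "'a set \<Rightarrow> ('a \<Rightarrow> 'a \<Rightarrow> int) \<Rightarrow> bool" where
  "signed_graph V sg \<longleftrightarrow> finite V \<and>
     (\<forall>u\<in>V. \<forall>v\<in>V. sg u v \<in> {-1, 0, 1} \<and> sg u v = sg v u) \<and>
     (\<forall>v\<in>V. sg v v = 0)"

definition adj :: "('a \<Rightarrow> 'a \<Rightarrow> int) \<Rightarrow> 'a \<Rightarrow> 'a \<Rightarrow> bool" where
  "adj sg u v \<longleftrightarrow> sg u v \<noteq> 0"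

definition A2 :: "'a set \<Rightarrow> ('a \<Rightarrow> 'a \<Rightarrow> int) \<Rightarrow> 'a \<Rightarrow> 'a \<Rightarrow> int" where
  "A2 V sg u v = (\<Sum>w\<in>V. sg u w * sg w v)"

definition degree :: "'a set \<Rightarrow> ('a \<Rightarrow> 'a \<Rightarrow> int) \<Rightarrow> 'a \<Rightarrow> nat" where
  "degree V sg v = card {u\<in>V. adj sg v u}"

definition pos_degree :: "'a set \<Rightarrow> ('a \<Rightarrow> 'a \<Rightarrow> int) \<Rightarrow> 'a \<Rightarrow> nat" where
  "pos_degree V sg v = card {u\<in>V. sg v u = 1}"

definition neg_degree :: "'a set \<Rightarrow> ('a \<Rightarrow> 'a \<Rightarrow> int) \<Rightarrow> 'a \<Rightarrow> nat" where
  "neg_degree V sg v = card {u\<in>V. sg v u = -1}"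

definition net_degree :: "'a set \<Rightarrow> ('a \<Rightarrow> 'a \<Rightarrow> int) \<Rightarrow> 'a \<Rightarrow> int" where
  "net_degree V sg v = int (pos_degree V sg v) - int (neg_degree V sg v)"

definition regular :: "'a set \<Rightarrow> ('a \<Rightarrow> 'a \<Rightarrow> int) \<Rightarrow> nat \<Rightarrow> bool" where
  "regular V sg r \<longleftrightarrow> (\<forall>v\<in>V. degree V sg v = r)"

definition net_regular :: "'a set \<Rightarrow> ('a \<Rightarrow> 'a \<Rightarrow> int) \<Rightarrow> int \<Rightarrow> bool" where
  "net_regular V sg \<rho> \<longleftrightarrow> (\<forall>v\<in>V. net_degree V sg v = \<rho>)"

definition complete :: "'a set \<Rightarrow> ('a \<Rightarrow> 'a \<Rightarrow> int) \<Rightarrow> bool" where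
  "complete V sg \<longleftrightarrow> (\<forall>u\<in>V. \<forall>v\<in>V. u \<noteq> v \<longrightarrow> adj sg u v)"

definition edgeless :: "'a set \<Rightarrow> ('a \<Rightarrow> 'a \<Rightarrow> int) \<Rightarrow> bool" where
  "edgeless V sg \<longleftrightarrow> (\<forall>u\<in>V. \<forall>v\<in>V. \<not> adj sg u v)"

definition homogeneous :: "'a set \<Rightarrow> ('a \<Rightarrow> 'a \<Rightarrow> int) \<Rightarrow> bool" where
  "homogeneous V sg \<longleftrightarrow> (\<forall>u\<in>V. \<forall>v\<in>V. sg u v \<noteq> -1) \<or> (\<forall>u\<in>V. \<forall>v\<in>V. sg u v \<noteq> 1)"

definition connected_sg :: "'a set \<Rightarrow> ('a \<Rightarrow> 'a \<Rightarrow> int) \<Rightarrow> bool" where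
  "connected_sg V sg \<longleftrightarrow> V \<noteq> {} \<and>
     (\<forall>u\<in>V. \<forall>v\<in>V. (\<lambda>x y. x \<in> V \<and> y \<in> V \<and> adj sg x y)\<^sup>*\<^sup>* u v)"

definition SRSG :: "'a set \<Rightarrow> ('a \<Rightarrow> 'a \<Rightarrow> int) \<Rightarrow> nat \<Rightarrow> nat \<Rightarrow> int \<Rightarrow> int \<Rightarrow> int \<Rightarrow> bool" where
  "SRSG V sg n r a b c \<longleftrightarrow> signed_graph V sg \<and> n = card V \<and>
     \<not> (homogeneous V sg \<and> complete V sg) \<and> \<not> edgeless V sg \<and>
     (\<forall>v\<in>V. A2 V sg v v = int r) \<and>
     (\<forall>u\<in>V. \<forall>v\<in>V. sg u v = 1 \<longrightarrow> A2 V sg u v = a) \<and>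
     (\<forall>u\<in>V. \<forall>v\<in>V. sg u v = -1 \<longrightarrow> A2 V sg u v = b) \<and>
     (\<forall>u\<in>V. \<forall>v\<in>V. u \<noteq> v \<and> \<not> adj sg u v \<longrightarrow> A2 V sg u v = c)"

definition class_C1 :: "'a set \<Rightarrow> ('a \<Rightarrow> 'a \<Rightarrow> int) \<Rightarrow> int \<Rightarrow> int \<Rightarrow> int \<Rightarrow> bool" where
  "class_C1 V sg a b c \<longleftrightarrow> \<not> homogeneous V sg \<and> a = - b \<and>
     (complete V sg \<or> (\<not> complete V sg \<and> c \<noteq> 0))"

definition class_C4 :: "'a set \<Rightarrow> ('a \<Rightarrow> 'a \<Rightarrow> int) \<Rightarrow> int \<Rightarrow> int \<Rightarrow> int \<Rightarrow> bool" where
  "class_C4 V sg a b c \<longleftrightarrow> \<not> homogeneous V sg \<and> a \<noteq> - b \<and> \<not> complete V sg \<and> c = 0"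

definition class_C5 :: "'a set \<Rightarrow> ('a \<Rightarrow> 'a \<Rightarrow> int) \<Rightarrow> int \<Rightarrow> int \<Rightarrow> int \<Rightarrow> bool" where
  "class_C5 V sg a b c \<longleftrightarrow> \<not> homogeneous V sg \<and> a \<noteq> - b \<and> \<not> complete V sg \<and> c \<noteq> 0 \<and>
     real_of_int c \<noteq> real_of_int (a + b) / 2"

end

theory Submission
  imports Defs
begin

lemma card_filter_int:
  assumes "finite A"
  shows "(\<Sum>x\<in>A. if P x then (k::int) else 0) = k * int (card {x\<in>A. P x})"
proof -
  have "(\<Sum>x\<in>A. if P x then k else 0) = (\<Sum>x\<in>{x\<in>A. P x}. k)"
    using sum.inter_filter[OF assms, of "\<lambda>_. k" P] by simp
  then show ?thesis by simp
qed

lemma card_filter_nat: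
  assumes "finite A"
  shows "card {x\<in>A. P x} = (\<Sum>x\<in>A. if P x then (1::nat) else 0)"
proof -
  have "(\<Sum>x\<in>A. if P x then (1::nat) else 0) = (\<Sum>x\<in>{x\<in>A. P x}. 1)"
    using sum.inter_filter[OF assms, of "\<lambda>_. 1::nat" P] by simp
  then show ?thesis by simp
qed

lemma double_count:
  assumes "finite A" "finite B"
  shows "(\<Sum>x\<in>A. card {y\<in>B. Q x y}) = (\<Sum>y\<in>B. card {x\<in>A. Q x y})"
proof -
  have "(\<Sum>x\<in>A. card {y\<in>B. Q x y}) = (\<Sum>x\<in>A. \<Sum>y\<in>B. if Q x y then (1::nat) else 0)"
    using assms by (simp add: card_filter_nat)
  also have "\<dots> = (\<Sum>y\<in>B. \<Sum>x\<in>A. if Q x y then (1::nat) else 0)"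
    by (rule sum.swap)
  also have "\<dots> = (\<Sum>y\<in>B. card {x\<in>A. Q x y})"
    using assms by (simp add: card_filter_nat)
  finally show ?thesis .
qed

lemma even_sym_sum:
  fixes f :: "'b \<Rightarrow> 'b \<Rightarrow> int"
  assumes "finite A" "\<forall>v\<in>A. \<forall>w\<in>A. f v w = f w v" "\<forall>v\<in>A. f v v = 0"
  shows "even (\<Sum>v\<in>A. \<Sum>w\<in>A. f v w)"
  using assms
proof (induction A rule: finite_induct)
  case empty
  then show ?case by simp
next
  case (insert x F)
  have e: "even (\<Sum>v\<in>F. \<Sum>w\<in>F. f v w)"
    apply (rule insert.IH) using insert.prems by blast+
  have s: "(\<Sum>v\<in>F. f v x) = (\<Sum>w\<in>F. f x w)"
    by (rule sum.cong) (use insert.prems insert.hyps in blast)+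
  have "(\<Sum>v\<in>insert x F. \<Sum>w\<in>insert x F. f v w)
      = f x x + (\<Sum>w\<in>F. f x w) + ((\<Sum>v\<in>F. f v x) + (\<Sum>v\<in>F. \<Sum>w\<in>F. f v w))"
    using insert.hyps by (simp add: sum.distrib sum.insert)
  also have "\<dots> = 2 * (\<Sum>w\<in>F. f x w) + (\<Sum>v\<in>F. \<Sum>w\<in>F. f v w)"
  proof -
    have "f x x = 0" using insert.prems(2) by blast
    then show ?thesis using s by simp
  qed
  finally show ?case using e by (metis dvd_add dvd_triv_left)
qed


locale srsg5 =
  fixes V :: "'a set" and sg :: "'a \<Rightarrow> 'a \<Rightarrow> int" and n :: nat and a b c :: int
  assumes srsg: "SRSG V sg n 5 a b c"
    and cls: "class_C1 V sg a b c \<or> class_C4 V sg a b c \<or> class_C5 V sg a b c"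
    and conn: "connected_sg V sg"
    and noncomp: "\<not> complete V sg"
    and reg: "regular V sg 5"
    and netreg: "net_regular V sg 1"
begin

definition "Pn u = {w\<in>V. sg u w = 1}"
definition "Mn u = {w\<in>V. sg u w = -1}"
definition "Nb u = {w\<in>V. sg u w \<noteq> 0}"
definition "Spp u v = {w\<in>V. sg u w = 1 \<and> sg v w = 1}"
definition "Smm u v = {w\<in>V. sg u w = -1 \<and> sg v w = -1}"
definition "Spm u v = {w\<in>V. sg u w = 1 \<and> sg v w = -1}"
definition "Smp u v = {w\<in>V. sg u w = -1 \<and> sg v w = 1}"
definition "Cm u v = {w\<in>V. sg u w \<noteq> 0 \<and> sg v w \<noteq> 0}"

lemma finV: "finite V"
  using srsg unfolding SRSG_def signed_graph_def by blast

lemma sgv: "u \<in> V \<Longrightarrow> v \<in> V \<Longrightarrow> sg u v = -1 \<or> sg u v = 0 \<or> sg u v = 1"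
  using srsg unfolding SRSG_def signed_graph_def by blast

lemma sym: "u \<in> V \<Longrightarrow> v \<in> V \<Longrightarrow> sg u v = sg v u"
  using srsg unfolding SRSG_def signed_graph_def by blast

lemma diag: "v \<in> V \<Longrightarrow> sg v v = 0"
  using srsg unfolding SRSG_def signed_graph_def by blast

lemma A2d: "v \<in> V \<Longrightarrow> A2 V sg v v = 5"
  using srsg unfolding SRSG_def by simp

lemma A2p: "u \<in> V \<Longrightarrow> v \<in> V \<Longrightarrow> sg u v = 1 \<Longrightarrow> A2 V sg u v = a"
  using srsg unfolding SRSG_def by blast

lemma A2m: "u \<in> V \<Longrightarrow> v \<in> V \<Longrightarrow> sg u v = -1 \<Longrightarrow> A2 V sg u v = b"
  using srsg unfolding SRSG_def by blast

lemma A2z: "u \<in> V \<Longrightarrow> v \<in> V \<Longrightarrow> u \<noteq> v \<Longrightarrow> sg u v = 0 \<Longrightarrow> A2 V sg u v = c"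
  using srsg unfolding SRSG_def adj_def by blast

lemma fins[simp]: "finite (Pn u)" "finite (Mn u)" "finite (Nb u)" "finite (Spp u v)"
  "finite (Smm u v)" "finite (Spm u v)" "finite (Smp u v)" "finite (Cm u v)"
  using finV by (auto simp: Pn_def Mn_def Nb_def Spp_def Smm_def Spm_def Smp_def Cm_def)

lemma card_PM:
  assumes u: "u \<in> V"
  shows "card (Pn u) = 3" "card (Mn u) = 2" "card (Nb u) = 5"
proof -
  have d: "card {w\<in>V. adj sg u w} = 5" using reg u unfolding regular_def degree_def by blast
  have nd: "int (card (Pn u)) - int (card (Mn u)) = 1"
    using netreg u unfolding net_regular_def net_degree_def pos_degree_def neg_degree_def Pn_def Mn_def
    by blast
  have eq: "{w\<in>V. adj sg u w} = Pn u \<union> Mn u"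
    using sgv[OF u] unfolding adj_def Pn_def Mn_def by force
  have "card (Pn u \<union> Mn u) = card (Pn u) + card (Mn u)"
    by (rule card_Un_disjoint[OF fins(1) fins(2)]) (auto simp: Pn_def Mn_def)
  then have s: "card (Pn u) + card (Mn u) = 5" using d eq by simp
  show "card (Pn u) = 3" "card (Mn u) = 2" using s nd by linarith+
  have "Nb u = {w\<in>V. adj sg u w}" unfolding Nb_def adj_def by simp
  then show "card (Nb u) = 5" using d by simp
qed

lemma rowsum: "u \<in> V \<Longrightarrow> (\<Sum>w\<in>V. sg u w) = 1"
proof -
  assume u: "u \<in> V"
  have "(\<Sum>w\<in>V. sg u w) = (\<Sum>w\<in>V. (if sg u w = 1 then 1 else 0) + (if sg u w = -1 then -1 else 0))"
    by (rule sum.cong) (use sgv[OF u] in auto)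
  also have "\<dots> = int (card (Pn u)) - int (card (Mn u))"
    unfolding sum.distrib using finV by (simp add: card_filter_int Pn_def Mn_def)
  finally show ?thesis using card_PM[OF u] by simp
qed

lemma A2_dec:
  assumes u: "u \<in> V" and v: "v \<in> V"
  shows "A2 V sg u v = int (card (Spp u v)) + int (card (Smm u v)) - int (card (Spm u v)) - int (card (Smp u v))"
proof -
  have "A2 V sg u v = (\<Sum>w\<in>V. (if sg u w = 1 \<and> sg v w = 1 then 1 else 0) + (if sg u w = -1 \<and> sg v w = -1 then 1 else 0)
      + (if sg u w = 1 \<and> sg v w = -1 then -1 else 0) + (if sg u w = -1 \<and> sg v w = 1 then -1 else 0))"
    unfolding A2_def
  proof (rule sum.cong)
    fix w assume w: "w \<in> V"
    show "sg u w * sg w v = (if sg u w = 1 \<and> sg v w = 1 then 1 else 0) + (if sg u w = -1 \<and> sg v w = -1 then 1 else 0)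
      + (if sg u w = 1 \<and> sg v w = -1 then -1 else 0) + (if sg u w = -1 \<and> sg v w = 1 then -1 else 0)"
      using sgv[OF u w] sgv[OF v w] sym[OF v w] by auto
  qed simp
  also have "\<dots> = int (card (Spp u v)) + int (card (Smm u v)) - int (card (Spm u v)) - int (card (Smp u v))"
    unfolding sum.distrib using finV by (simp add: card_filter_int Spp_def Smm_def Spm_def Smp_def)
  finally show ?thesis .
qed


lemma X_dec:
  assumes u: "u \<in> V" and v: "v \<in> V"
  shows "(\<Sum>w\<in>V. sg u w * \<bar>sg w v\<bar>) = int (card (Spp u v)) + int (card (Spm u v)) - int (card (Smp u v)) - int (card (Smm u v))"
proof -
  have "(\<Sum>w\<in>V. sg u w * \<bar>sg w v\<bar>) = (\<Sum>w\<in>V. (if sg u w = 1 \<and> sg v w = 1 then 1 else 0) + (if sg u w = 1 \<and> sg v w = -1 then 1 else 0)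
      + (if sg u w = -1 \<and> sg v w = 1 then -1 else 0) + (if sg u w = -1 \<and> sg v w = -1 then -1 else 0))"
  proof (rule sum.cong)
    fix w assume w: "w \<in> V"
    show "sg u w * \<bar>sg w v\<bar> = (if sg u w = 1 \<and> sg v w = 1 then 1 else 0) + (if sg u w = 1 \<and> sg v w = -1 then 1 else 0)
      + (if sg u w = -1 \<and> sg v w = 1 then -1 else 0) + (if sg u w = -1 \<and> sg v w = -1 then -1 else 0)"
      using sgv[OF u w] sgv[OF v w] sym[OF v w] by auto
  qed simp
  also have "\<dots> = int (card (Spp u v)) + int (card (Spm u v)) - int (card (Smp u v)) - int (card (Smm u v))"
    unfolding sum.distrib using finV by (simp add: card_filter_int Spp_def Smm_def Spm_def Smp_def)
  finally show ?thesis .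
qed

lemma Y_dec:
  assumes u: "u \<in> V" and v: "v \<in> V"
  shows "(\<Sum>w\<in>V. \<bar>sg u w\<bar> * sg w v) = int (card (Spp u v)) - int (card (Spm u v)) + int (card (Smp u v)) - int (card (Smm u v))"
proof -
  have "(\<Sum>w\<in>V. \<bar>sg u w\<bar> * sg w v) = (\<Sum>w\<in>V. (if sg u w = 1 \<and> sg v w = 1 then 1 else 0) + (if sg u w = 1 \<and> sg v w = -1 then -1 else 0)
      + (if sg u w = -1 \<and> sg v w = 1 then 1 else 0) + (if sg u w = -1 \<and> sg v w = -1 then -1 else 0))"
  proof (rule sum.cong)
    fix w assume w: "w \<in> V"
    show "\<bar>sg u w\<bar> * sg w v = (if sg u w = 1 \<and> sg v w = 1 then 1 else 0) + (if sg u w = 1 \<and> sg v w = -1 then -1 else 0)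
      + (if sg u w = -1 \<and> sg v w = 1 then 1 else 0) + (if sg u w = -1 \<and> sg v w = -1 then -1 else 0)"
      using sgv[OF u w] sgv[OF v w] sym[OF v w] by auto
  qed simp
  also have "\<dots> = int (card (Spp u v)) - int (card (Spm u v)) + int (card (Smp u v)) - int (card (Smm u v))"
    unfolding sum.distrib using finV by (simp add: card_filter_int Spp_def Smm_def Spm_def Smp_def)
  finally show ?thesis .
qed

lemma assoc:
  "(\<Sum>w\<in>V. sg u w * A2 V sg w v) = (\<Sum>w\<in>V. A2 V sg u w * sg w v)"
proof -
  have "(\<Sum>w\<in>V. sg u w * A2 V sg w v) = (\<Sum>w\<in>V. \<Sum>x\<in>V. sg u w * (sg w x * sg x v))"
    unfolding A2_def by (simp add: sum_distrib_left)
  also have "\<dots> = (\<Sum>x\<in>V. \<Sum>w\<in>V. sg u w * (sg w x * sg x v))" by (rule sum.swap)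
  also have "\<dots> = (\<Sum>x\<in>V. (\<Sum>w\<in>V. sg u w * sg w x) * sg x v)"
    by (simp add: sum_distrib_right mult.assoc)
  finally show ?thesis unfolding A2_def .
qed

lemma form:
  assumes w: "w \<in> V" and v: "v \<in> V"
  shows "2 * A2 V sg w v = 2*(5-c)*(if w = v then 1 else 0) + (a-b)*sg w v + (a+b-2*c)*\<bar>sg w v\<bar> + 2*c"
proof (cases "w = v")
  case True then show ?thesis using A2d[OF v] diag[OF v] by simp
next
  case False
  then show ?thesis using sgv[OF w v] A2p[OF w v] A2m[OF w v] A2z[OF w v False] by auto
qed

lemma cls_ne: "a + b - 2*c \<noteq> 0"
proof -
  have "complete V sg = False" using noncomp by simp
  have r: "real_of_int c \<noteq> real_of_int (a + b) / 2 \<Longrightarrow> a + b - 2*c \<noteq> 0"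
  proof
    assume "real_of_int c \<noteq> real_of_int (a + b) / 2" "a + b - 2*c = 0"
    then show False by (simp add: field_simps)
  qed
  show ?thesis using cls r noncomp unfolding class_C1_def class_C4_def class_C5_def by auto
qed

lemma comm:
  assumes u: "u \<in> V" and v: "v \<in> V"
  shows "card (Spm u v) = card (Smp u v)"
proof -
  let ?X = "\<Sum>w\<in>V. sg u w * \<bar>sg w v\<bar>"
  let ?Y = "\<Sum>w\<in>V. \<bar>sg u w\<bar> * sg w v"
  have L1: "2 * (\<Sum>w\<in>V. sg u w * A2 V sg w v) = 2*(5-c)*sg u v + (a-b)*A2 V sg u v + (a+b-2*c)*?X + 2*c"
  proof -
    have "2 * (\<Sum>w\<in>V. sg u w * A2 V sg w v) = (\<Sum>w\<in>V. sg u w * (2 * A2 V sg w v))"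
      by (simp add: sum_distrib_left mult.left_commute)
    also have "\<dots> = (\<Sum>w\<in>V. 2*(5-c)*(if w = v then sg u w else 0) + (a-b)*(sg u w * sg w v) + (a+b-2*c)*(sg u w*\<bar>sg w v\<bar>) + 2*c*sg u w)"
      by (rule sum.cong) (auto simp: form[OF _ v] algebra_simps)
    also have "\<dots> = 2*(5-c)*sg u v + (a-b)*A2 V sg u v + (a+b-2*c)*?X + 2*c*(\<Sum>w\<in>V. sg u w)"
      unfolding sum.distrib A2_def using v finV by (simp add: sum_distrib_left[symmetric])
    finally show ?thesis using rowsum[OF u] by simp
  qed
  have L2: "2 * (\<Sum>w\<in>V. A2 V sg u w * sg w v) = 2*(5-c)*sg u v + (a-b)*A2 V sg u v + (a+b-2*c)*?Y + 2*c"
  proof -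
    have "2 * (\<Sum>w\<in>V. A2 V sg u w * sg w v) = (\<Sum>w\<in>V. (2 * A2 V sg u w) * sg w v)"
      by (simp add: sum_distrib_left mult.assoc)
    also have "\<dots> = (\<Sum>w\<in>V. 2*(5-c)*(if u = w then sg w v else 0) + (a-b)*(sg u w * sg w v) + (a+b-2*c)*(\<bar>sg u w\<bar> * sg w v) + 2*c*sg v w)"
      by (rule sum.cong) (auto simp: form[OF u] algebra_simps sym[OF v])
    also have "\<dots> = 2*(5-c)*sg u v + (a-b)*A2 V sg u v + (a+b-2*c)*?Y + 2*c*(\<Sum>w\<in>V. sg v w)"
      unfolding sum.distrib A2_def using u finV by (simp add: sum_distrib_left[symmetric])
    finally show ?thesis using rowsum[OF v] by simp
  qed
  have "(a+b-2*c) * (?X - ?Y) = 0" using L1 L2 assoc[of u v] by (simp add: algebra_simps)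
  then have "?X = ?Y" using cls_ne by simp
  then show ?thesis using X_dec[OF u v] Y_dec[OF u v] by simp
qed


lemma Vne: "V \<noteq> {}" using conn unfolding connected_sg_def by blast

lemma edge_sets:
  assumes u: "u \<in> V" and v: "v \<in> V"
  shows "card (Spp u v) + card (Spm u v) \<le> card (Pn u - {v})"
    "card (Smm u v) + card (Smp u v) \<le> card (Mn u - {v})"
    "card (Cm u v) = card (Spp u v) + card (Smm u v) + card (Spm u v) + card (Smp u v)"
proof -
  have "card (Spp u v \<union> Spm u v) = card (Spp u v) + card (Spm u v)"
    by (rule card_Un_disjoint[OF fins(4) fins(6)]) (auto simp: Spp_def Spm_def)
  moreover have "Spp u v \<union> Spm u v \<subseteq> Pn u - {v}"
    using diag[OF v] by (auto simp: Spp_def Spm_def Pn_def)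
  ultimately show "card (Spp u v) + card (Spm u v) \<le> card (Pn u - {v})"
    by (metis card_mono finite_Diff fins(1))
  have "card (Smm u v \<union> Smp u v) = card (Smm u v) + card (Smp u v)"
    by (rule card_Un_disjoint[OF fins(5) fins(7)]) (auto simp: Smm_def Smp_def)
  moreover have "Smm u v \<union> Smp u v \<subseteq> Mn u - {v}"
    using diag[OF v] by (auto simp: Smm_def Smp_def Mn_def)
  ultimately show "card (Smm u v) + card (Smp u v) \<le> card (Mn u - {v})"
    by (metis card_mono finite_Diff fins(2))
  have e: "Cm u v = (Spp u v \<union> Smm u v) \<union> (Spm u v \<union> Smp u v)"
    unfolding Cm_def Spp_def Smm_def Spm_def Smp_def using sgv[OF u] sgv[OF v] by auto
  have "card ((Spp u v \<union> Smm u v) \<union> (Spm u v \<union> Smp u v)) = card (Spp u v \<union> Smm u v) + card (Spm u v \<union> Smp u v)"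
    by (rule card_Un_disjoint[OF finite_UnI[OF fins(4) fins(5)] finite_UnI[OF fins(6) fins(7)]]) (auto simp: Spp_def Smm_def Spm_def Smp_def)
  moreover have "card (Spp u v \<union> Smm u v) = card (Spp u v) + card (Smm u v)"
    by (rule card_Un_disjoint[OF fins(4) fins(5)]) (auto simp: Spp_def Smm_def)
  moreover have "card (Spm u v \<union> Smp u v) = card (Spm u v) + card (Smp u v)"
    by (rule card_Un_disjoint[OF fins(6) fins(7)]) (auto simp: Spm_def Smp_def)
  ultimately show "card (Cm u v) = card (Spp u v) + card (Smm u v) + card (Spm u v) + card (Smp u v)"
    using e by simp
qed

lemma pos_edge:
  assumes u: "u \<in> V" and v: "v \<in> V" and e: "sg u v = 1"
  shows "a = int (card (Spp u v)) + int (card (Smm u v)) - 2 * int (card (Spm u v))"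
    "card (Spp u v) + card (Spm u v) \<le> 2" "card (Smm u v) + card (Spm u v) \<le> 2"
    "card (Smp u v) = card (Spm u v)"
    "card (Cm u v) = card (Spp u v) + card (Smm u v) + 2 * card (Spm u v)"
proof -
  have vP: "v \<in> Pn u" using v e by (simp add: Pn_def)
  have vM: "v \<notin> Mn u" using e by (simp add: Mn_def)
  have c1: "card (Pn u - {v}) = 2" using card_PM[OF u] vP by simp
  have c2: "card (Mn u - {v}) = 2" using card_PM[OF u] vM by simp
  have cm: "card (Smp u v) = card (Spm u v)" using comm[OF u v] by simp
  show "card (Smp u v) = card (Spm u v)" by (rule cm)
  show "a = int (card (Spp u v)) + int (card (Smm u v)) - 2 * int (card (Spm u v))"
    using A2_dec[OF u v] A2p[OF u v e] cm by simp
  show "card (Spp u v) + card (Spm u v) \<le> 2" using edge_sets(1)[OF u v] c1 by simp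
  show "card (Smm u v) + card (Spm u v) \<le> 2" using edge_sets(2)[OF u v] c2 cm by simp
  show "card (Cm u v) = card (Spp u v) + card (Smm u v) + 2 * card (Spm u v)"
    using edge_sets(3)[OF u v] cm by simp
qed

lemma neg_edge:
  assumes u: "u \<in> V" and v: "v \<in> V" and e: "sg u v = -1"
  shows "b = int (card (Spp u v)) + int (card (Smm u v)) - 2 * int (card (Spm u v))"
    "card (Spp u v) + card (Spm u v) \<le> 3" "card (Smm u v) + card (Spm u v) \<le> 1"
    "card (Smp u v) = card (Spm u v)"
    "card (Cm u v) = card (Spp u v) + card (Smm u v) + 2 * card (Spm u v)"
proof -
  have vP: "v \<notin> Pn u" using v e by (simp add: Pn_def)
  have vM: "v \<in> Mn u" using e v by (simp add: Mn_def)
  have c1: "card (Pn u - {v}) = 3" using card_PM[OF u] vP by simp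
  have c2: "card (Mn u - {v}) = 1" using card_PM[OF u] vM by simp
  have cm: "card (Smp u v) = card (Spm u v)" using comm[OF u v] by simp
  show "card (Smp u v) = card (Spm u v)" by (rule cm)
  show "b = int (card (Spp u v)) + int (card (Smm u v)) - 2 * int (card (Spm u v))"
    using A2_dec[OF u v] A2m[OF u v e] cm by simp
  show "card (Spp u v) + card (Spm u v) \<le> 3" using edge_sets(1)[OF u v] c1 by simp
  show "card (Smm u v) + card (Spm u v) \<le> 1" using edge_sets(2)[OF u v] c2 cm by simp
  show "card (Cm u v) = card (Spp u v) + card (Smm u v) + 2 * card (Spm u v)"
    using edge_sets(3)[OF u v] cm by simp
qed

lemma a_even: "even a"
proof -
  obtain u where u: "u \<in> V" using Vne by blast
  let ?f = "\<lambda>v w. sg u v * (sg v w * sg w u)"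
  have T1: "(\<Sum>v\<in>V. sg u v * A2 V sg v u) = (\<Sum>v\<in>V. \<Sum>w\<in>V. ?f v w)"
    unfolding A2_def by (simp add: sum_distrib_left)
  have ev: "even (\<Sum>v\<in>V. \<Sum>w\<in>V. ?f v w)"
  proof (rule even_sym_sum[OF finV])
    show "\<forall>v\<in>V. \<forall>w\<in>V. ?f v w = ?f w v"
    proof (intro ballI)
      fix v w assume v: "v \<in> V" and w: "w \<in> V"
      have "sg u w = sg w u" "sg w v = sg v w" "sg v u = sg u v"
        using sym u v w by auto
      then show "?f v w = ?f w v" by (simp add: ac_simps)
    qed
    show "\<forall>v\<in>V. ?f v v = 0" using diag by simp
  qed
  have T2: "(\<Sum>v\<in>V. sg u v * A2 V sg v u) = (\<Sum>v\<in>V. (if sg u v = 1 then a else 0) + (if sg u v = -1 then -b else 0))"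
  proof (rule sum.cong)
    fix v assume v: "v \<in> V"
    show "sg u v * A2 V sg v u = (if sg u v = 1 then a else 0) + (if sg u v = -1 then -b else 0)"
      using sgv[OF u v] sym[OF u v] A2p[OF v u] A2m[OF v u] by auto
  qed simp
  also have "\<dots> = a * int (card (Pn u)) - b * int (card (Mn u))"
    unfolding sum.distrib using finV by (simp add: card_filter_int Pn_def Mn_def)
  also have "\<dots> = 3 * a - 2 * b" using card_PM[OF u] by simp
  finally have "even (3 * a - 2 * b)" using ev T1 by simp
  then show ?thesis by simp
qed

lemma closed_False:
  assumes u: "u \<in> V" and cl: "\<forall>x\<in>insert u (Nb u). Nb x \<subseteq> insert u (Nb u)"
  shows False
proof -
  let ?S = "insert u (Nb u)"
  have SV: "?S \<subseteq> V" using u by (auto simp: Nb_def)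
  have reach: "v \<in> ?S" if "(\<lambda>x y. x \<in> V \<and> y \<in> V \<and> adj sg x y)\<^sup>*\<^sup>* u v" for v
    using that
  proof (induction rule: rtranclp_induct)
    case base then show ?case by simp
  next
    case (step y z)
    then have "z \<in> Nb y" by (auto simp: Nb_def adj_def)
    then show ?case using cl step.IH by blast
  qed
  have VS: "V = ?S" using SV reach conn u unfolding connected_sg_def by blast
  have uN: "u \<notin> Nb u" using diag[OF u] by (simp add: Nb_def)
  have "card ?S = 6" using card_PM(3)[OF u] uN by simp
  then have cV: "card V = 6" using VS by metis
  have "complete V sg"
    unfolding complete_def
  proof (intro ballI impI)
    fix x y assume x: "x \<in> V" and y: "y \<in> V" and xy: "x \<noteq> y"
    have sub: "Nb x \<subseteq> V - {x}" using diag[OF x] by (auto simp: Nb_def)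
    have "card (V - {x}) = 5" using cV x finV by simp
    then have "Nb x = V - {x}" using card_subset_eq[OF _ sub] card_PM(3)[OF x] finV by simp
    then show "adj sg x y" using y xy by (auto simp: Nb_def adj_def)
  qed
  then show False using noncomp by simp
qed

lemma four_common:
  assumes u: "u \<in> V" and v: "v \<in> V" and e: "sg u v \<noteq> 0" and c4: "card (Cm u v) = 4"
  shows "insert u (Nb u) = insert v (Nb v)"
proof -
  have vN: "v \<in> Nb u" using v e by (simp add: Nb_def)
  have uN: "u \<in> Nb v" using u e sym[OF u v] by (simp add: Nb_def)
  have s1: "Cm u v \<subseteq> Nb u - {v}" using diag[OF v] by (auto simp: Cm_def Nb_def)
  have "card (Nb u - {v}) = 4" using card_PM(3)[OF u] vN by simp
  then have e1: "Cm u v = Nb u - {v}" using card_subset_eq[OF _ s1] c4 by simp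
  have s2: "Cm u v \<subseteq> Nb v - {u}" using diag[OF u] by (auto simp: Cm_def Nb_def)
  have "card (Nb v - {u}) = 4" using card_PM(3)[OF v] uN by simp
  then have e2: "Cm u v = Nb v - {u}" using card_subset_eq[OF _ s2] c4 by simp
  show ?thesis using e1 e2 vN uN by blast
qed


lemma Lpos:
  assumes H: "\<forall>u\<in>V. \<forall>v\<in>V. sg u v = 1 \<longrightarrow> Cm u v = {} \<or> card (Cm u v) = 4"
  shows "\<forall>u\<in>V. \<forall>v\<in>V. sg u v = 1 \<longrightarrow> Cm u v = {}"
proof (intro ballI impI, rule ccontr)
  fix u v assume u: "u \<in> V" and v: "v \<in> V" and e: "sg u v = 1" and ne: "Cm u v \<noteq> {}"
  have c4: "card (Cm u v) = 4" using H u v e ne by blast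
  let ?S = "insert u (Nb u)"
  have Suv: "?S = insert v (Nb v)" using four_common[OF u v _ c4] e by simp
  have posS: "insert p (Nb p) = ?S" if p: "p \<in> Pn u" for p
  proof (cases "p = v")
    case True then show ?thesis using Suv by simp
  next
    case False
    have pV: "p \<in> V" and up: "sg u p = 1" using p by (auto simp: Pn_def)
    have "p \<in> Nb u" using pV up by (simp add: Nb_def)
    then have "p \<in> Nb v" using Suv False by blast
    then have "v \<in> Cm u p" using v e sym[OF v pV] by (auto simp: Nb_def Cm_def)
    then have "card (Cm u p) = 4" using H u pV up by blast
    then show ?thesis using four_common[OF u pV _] up by simp
  qed
  have negS: "insert m (Nb m) = ?S" if m: "m \<in> Mn u" for m
  proof -
    have mV: "m \<in> V" and um: "sg u m = -1" using m by (auto simp: Mn_def)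
    have adjp: "sg m p \<noteq> 0" if p: "p \<in> Pn u" for p
    proof -
      have pV: "p \<in> V" and up: "sg u p = 1" using p by (auto simp: Pn_def)
      have "m \<in> Nb u" using mV um by (simp add: Nb_def)
      then have "m \<in> insert p (Nb p)" using posS[OF p] by blast
      moreover have "m \<noteq> p" using um up by auto
      ultimately show ?thesis using sym[OF mV pV] by (auto simp: Nb_def)
    qed
    have "\<exists>p\<in>Pn u. sg m p = 1"
    proof (rule ccontr)
      assume "\<not> (\<exists>p\<in>Pn u. sg m p = 1)"
      then have "Pn u \<subseteq> Mn m" using adjp sgv[OF mV] by (force simp: Pn_def Mn_def)
      then have "card (Pn u) \<le> card (Mn m)" by (rule card_mono[OF fins(2)])
      then show False using card_PM[OF u] card_PM[OF mV] by simp
    qed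
    then obtain p where p: "p \<in> Pn u" and mp: "sg m p = 1" by blast
    have pV: "p \<in> V" and up: "sg u p = 1" using p by (auto simp: Pn_def)
    have "u \<in> Cm m p" using u um up sym[OF u mV] sym[OF u pV] by (auto simp: Cm_def)
    then have "card (Cm m p) = 4" using H mV pV mp by blast
    then have "insert m (Nb m) = insert p (Nb p)" using four_common[OF mV pV] mp by simp
    then show ?thesis using posS[OF p] by simp
  qed
  have "\<forall>x\<in>?S. Nb x \<subseteq> ?S"
  proof
    fix x assume x: "x \<in> ?S"
    show "Nb x \<subseteq> ?S"
    proof (cases "x = u")
      case True then show ?thesis by auto
    next
      case False
      then have xV: "x \<in> V" and "sg u x \<noteq> 0" using x by (auto simp: Nb_def)
      then have "x \<in> Pn u \<or> x \<in> Mn u" using sgv[OF u xV] by (auto simp: Pn_def Mn_def)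
      then have "insert x (Nb x) = ?S" using posS negS by blast
      then show ?thesis by blast
    qed
  qed
  then show False using closed_False[OF u] by blast
qed

lemma Lneg0:
  assumes H: "\<forall>u\<in>V. \<forall>v\<in>V. sg u v = -1 \<longrightarrow> Cm u v = {} \<or> (card (Cm u v) = 4 \<and> Smm u v = {})"
  shows "\<forall>u\<in>V. \<forall>v\<in>V. sg u v = -1 \<longrightarrow> Cm u v = {}"
proof (intro ballI impI, rule ccontr)
  fix u v assume u: "u \<in> V" and v: "v \<in> V" and e: "sg u v = -1" and ne: "Cm u v \<noteq> {}"
  have c4: "card (Cm u v) = 4" and mm: "Smm u v = {}" using H u v e ne by blast+
  let ?S = "insert u (Nb u)"
  have Suv: "?S = insert v (Nb v)" using four_common[OF u v _ c4] e by simp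
  have "card (Mn u - {v}) = 1" using card_PM(2)[OF u] e v by (simp add: Mn_def)
  then obtain t where t: "t \<in> Mn u" "t \<noteq> v" by (metis Diff_iff card_1_singletonE insertI1)
  have vu: "sg v u = -1" using e sym[OF u v] by simp
  have "card (Mn v - {u}) = 1" using card_PM(2)[OF v] vu u by (simp add: Mn_def)
  then obtain t' where t': "t' \<in> Mn v" "t' \<noteq> u" by (metis Diff_iff card_1_singletonE insertI1)
  have tV: "t \<in> V" and ut: "sg u t = -1" using t by (auto simp: Mn_def)
  have t'V: "t' \<in> V" and vt': "sg v t' = -1" using t' by (auto simp: Mn_def)
  have tt': "t \<noteq> t'" using mm ut vt' tV by (auto simp: Smm_def)
  have clt: "insert t (Nb t) = ?S"
  proof -
    have "t \<in> Nb u" using tV ut by (simp add: Nb_def)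
    then have "t \<in> Nb v" using Suv t(2) by blast
    then have "v \<in> Cm u t" using v e sym[OF v tV] by (auto simp: Nb_def Cm_def)
    then have "card (Cm u t) = 4" using H u tV ut by blast
    then show ?thesis using four_common[OF u tV] ut by simp
  qed
  have clt': "insert t' (Nb t') = ?S"
  proof -
    have "t' \<in> Nb v" using t'V vt' by (simp add: Nb_def)
    then have "t' \<in> Nb u" using Suv t'(2) by blast
    then have "u \<in> Cm v t'" using u vu sym[OF u t'V] by (auto simp: Nb_def Cm_def)
    then have "card (Cm v t') = 4" using H v t'V vt' by blast
    then show ?thesis using four_common[OF v t'V] vt' Suv by simp
  qed
  have d: "u \<noteq> v" "u \<noteq> t" "u \<noteq> t'" "v \<noteq> t" "v \<noteq> t'" "t \<noteq> t'"
    using e diag[OF u] diag[OF v] ut vt' t(2) t'(2) tt' by auto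
  let ?Q = "{u, v, t, t'}"
  have cQ: "card ?Q = 4" using d by simp
  have QS': "insert q (Nb q) = ?S" if "q \<in> ?Q" for q
    using that Suv clt clt' by blast
  have QS: "\<forall>q\<in>?Q. insert q (Nb q) = ?S" using QS' by blast
  have QV: "?Q \<subseteq> V" using u v tV t'V by auto
  have all: "insert x (Nb x) = ?S" if x: "x \<in> ?S" for x
  proof (cases "x \<in> ?Q")
    case True then show ?thesis using QS by blast
  next
    case False
    have xV: "x \<in> V" using x u by (auto simp: Nb_def)
    have adjq: "sg x q \<noteq> 0" if q: "q \<in> ?Q" for q
    proof -
      have "x \<in> insert q (Nb q)" using QS q x by blast
      then have "x \<in> Nb q" using False q by blast
      then show ?thesis using sym[OF xV] QV q by (auto simp: Nb_def)
    qed
    have "\<exists>q\<in>?Q. sg x q = -1"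
    proof (rule ccontr)
      assume neg: "\<not> (\<exists>q\<in>?Q. sg x q = -1)"
      have "?Q \<subseteq> Pn x"
      proof
        fix q assume q: "q \<in> ?Q"
        have "q \<in> V" using QV q by blast
        moreover have "sg x q \<noteq> 0" using adjq[OF q] .
        moreover have "sg x q \<noteq> -1" using neg q by blast
        ultimately show "q \<in> Pn x" using sgv[OF xV, of q] by (simp add: Pn_def)
      qed
      then have "card ?Q \<le> card (Pn x)" by (rule card_mono[OF fins(1)])
      then show False using cQ card_PM[OF xV] by simp
    qed
    then obtain q where q: "q \<in> ?Q" and xq: "sg x q = -1" by blast
    define r where "r = (if q = u then v else u)"
    have r: "r \<in> ?Q" "r \<noteq> q" using d unfolding r_def by auto
    have qV: "q \<in> V" and rV: "r \<in> V" using q r QV by auto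
    have "v \<in> Nb u" using v e by (simp add: Nb_def)
    then have "r \<in> ?S" unfolding r_def by auto
    then have "r \<in> insert q (Nb q)" using QS q by blast
    then have "sg q r \<noteq> 0" using r(2) by (auto simp: Nb_def)
    then have "r \<in> Cm x q" using adjq[OF r(1)] rV by (auto simp: Cm_def)
    then have "card (Cm x q) = 4" using H xV qV xq by blast
    then have "insert x (Nb x) = insert q (Nb q)" using four_common[OF xV qV] xq by simp
    then show ?thesis using QS'[OF q] by simp
  qed
  have "\<forall>x\<in>?S. Nb x \<subseteq> ?S" using all by blast
  then show False using closed_False[OF u] by blast
qed

lemma Lneg4:
  assumes H: "\<forall>u\<in>V. \<forall>v\<in>V. sg u v = -1 \<longrightarrow> card (Cm u v) = 4 \<and> card (Spp u v) = 3"
  shows False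
proof -
  obtain u where u: "u \<in> V" using Vne by blast
  have "card (Mn u) = 2" using card_PM[OF u] by simp
  then obtain v t where vt: "Mn u = {v, t}" "v \<noteq> t" by (meson card_2_iff)
  have vV: "v \<in> V" and uv: "sg u v = -1" and tV: "t \<in> V" and ut: "sg u t = -1"
    using vt by (auto simp: Mn_def)
  let ?S = "insert u (Nb u)"
  have Sv: "?S = insert v (Nb v)" using four_common[OF u vV] H u vV uv by simp
  have St: "?S = insert t (Nb t)" using four_common[OF u tV] H u tV ut by simp
  have sppv: "Spp u v = Pn u"
  proof (rule card_subset_eq[OF fins(1)])
    show "Spp u v \<subseteq> Pn u" by (auto simp: Spp_def Pn_def)
    show "card (Spp u v) = card (Pn u)" using H u vV uv card_PM[OF u] by simp
  qed
  have sppt: "Spp u t = Pn u"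
  proof (rule card_subset_eq[OF fins(1)])
    show "Spp u t \<subseteq> Pn u" by (auto simp: Spp_def Pn_def)
    show "card (Spp u t) = card (Pn u)" using H u tV ut card_PM[OF u] by simp
  qed
  have d: "u \<noteq> v" "u \<noteq> t" using uv ut diag[OF u] by auto
  have cl: "Nb x \<subseteq> ?S" if x: "x \<in> ?S" for x
  proof (cases "x \<in> {u, v, t}")
    case True
    then have "insert x (Nb x) = ?S" using Sv St by blast
    then show ?thesis by blast
  next
    case False
    have xV: "x \<in> V" and ux: "sg u x \<noteq> 0" using x False by (auto simp: Nb_def)
    have "x \<notin> Mn u" using vt False by auto
    then have ux1: "sg u x = 1" using ux sgv[OF u xV] xV by (auto simp: Mn_def)
    then have xP: "x \<in> Pn u" using xV by (simp add: Pn_def)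
    have vx: "sg v x = 1" using xP sppv by (auto simp: Spp_def)
    have tx: "sg t x = 1" using xP sppt by (auto simp: Spp_def)
    have sub: "{u, v, t} \<subseteq> Pn x" using ux1 vx tx sym[OF u xV] sym[OF vV xV] sym[OF tV xV] u vV tV
      by (auto simp: Pn_def)
    have "card {u, v, t} = 3" using d vt(2) by simp
    then have Px: "Pn x = {u, v, t}" using card_subset_eq[OF fins(1) sub] card_PM[OF xV] by simp
    show ?thesis
    proof
      fix y assume y: "y \<in> Nb x"
      have yV: "y \<in> V" using y by (simp add: Nb_def)
      have "sg x y = 1 \<or> sg x y = -1" using y sgv[OF xV yV] by (auto simp: Nb_def)
      then show "y \<in> ?S"
      proof
        assume "sg x y = 1"
        then have "y \<in> {u, v, t}" using Px yV by (auto simp: Pn_def)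
        moreover have "v \<in> ?S" "t \<in> ?S" using Sv St by blast+
        ultimately show ?thesis by blast
      next
        assume xy: "sg x y = -1"
        then have "insert x (Nb x) = insert y (Nb y)" using four_common[OF xV yV] H xV yV by simp
        moreover have "u \<in> Nb x" using ux1 sym[OF u xV] u by (simp add: Nb_def)
        ultimately have "u = y \<or> u \<in> Nb y" by blast
        then show ?thesis using sym[OF u yV] yV by (auto simp: Nb_def)
      qed
    qed
  qed
  then show False using closed_False[OF u] by blast
qed

lemma card_pos_ne: "finite A \<Longrightarrow> card A \<ge> 1 \<Longrightarrow> A \<noteq> {}"
  by auto

lemma main:
  shows "a < 3
    \<and> (a = 0 \<longrightarrow> (\<forall>u\<in>V. \<forall>v\<in>V. sg u v = 1 \<longrightarrow>
                     \<not> (\<exists>w\<in>V. adj sg u w \<and> adj sg v w)))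
    \<and> (b = 0 \<longrightarrow> (\<forall>u\<in>V. \<forall>v\<in>V. sg u v = -1 \<longrightarrow>
                     \<not> (\<exists>w\<in>V. adj sg u w \<and> adj sg v w)))
    \<and> (a = -1 \<longrightarrow> b \<le> 0)
    \<and> (a = -2 \<longrightarrow> b \<ge> -1)
    \<and> a > -3
    \<and> (-2 \<le> b \<and> b < 3)
    \<and> ((\<exists>u\<in>V. \<exists>v\<in>V. \<exists>w\<in>V. u \<noteq> v \<and> v \<noteq> w \<and> u \<noteq> w \<and>
          sg u v = -1 \<and> sg v w = -1 \<and> sg u v * sg v w * sg w u = 1) \<longrightarrow> b \<le> 0)
    \<and> ((b = 2 \<or> b = -1) \<longrightarrow> a \<le> 0)
    \<and> (b = -2 \<longrightarrow> a \<ge> 1)"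
proof -
  obtain u0 where u0: "u0 \<in> V" using Vne by blast
  have "Pn u0 \<noteq> {}" using card_PM(1)[OF u0] by auto
  then obtain p0 where "p0 \<in> Pn u0" by blast
  then have p0: "p0 \<in> V" "sg u0 p0 = 1" by (auto simp: Pn_def)
  have "Mn u0 \<noteq> {}" using card_PM(2)[OF u0] by auto
  then obtain m0 where "m0 \<in> Mn u0" by blast
  then have m0: "m0 \<in> V" "sg u0 m0 = -1" by (auto simp: Mn_def)
  note pe = pos_edge[OF u0 p0(1) p0(2)]
  note ne = neg_edge[OF u0 m0(1) m0(2)]
  have arange: "-4 \<le> a \<and> a \<le> 4" using pe(1-3) by linarith
  have brange: "-2 \<le> b \<and> b \<le> 4" using ne(1-3) by linarith
  have a_ne4: "a \<noteq> 4"
  proof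
    assume a4: "a = 4"
    have "\<forall>u\<in>V. \<forall>v\<in>V. sg u v = 1 \<longrightarrow> Cm u v = {} \<or> card (Cm u v) = 4"
    proof (intro ballI impI)
      fix u v assume u: "u \<in> V" and v: "v \<in> V" and e: "sg u v = 1"
      note q = pos_edge[OF u v e]
      show "Cm u v = {} \<or> card (Cm u v) = 4" using q a4 by linarith
    qed
    then have "Cm u0 p0 = {}" using Lpos u0 p0 by blast
    moreover have "card (Cm u0 p0) = 4" using pe a4 by linarith
    ultimately show False by simp
  qed
  have a_nem4: "a \<noteq> -4"
  proof
    assume a4: "a = -4"
    have "\<forall>u\<in>V. \<forall>v\<in>V. sg u v = 1 \<longrightarrow> Cm u v = {} \<or> card (Cm u v) = 4"
    proof (intro ballI impI)
      fix u v assume u: "u \<in> V" and v: "v \<in> V" and e: "sg u v = 1"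
      note q = pos_edge[OF u v e]
      show "Cm u v = {} \<or> card (Cm u v) = 4" using q a4 by linarith
    qed
    then have "Cm u0 p0 = {}" using Lpos u0 p0 by blast
    moreover have "card (Cm u0 p0) = 4" using pe a4 by linarith
    ultimately show False by simp
  qed
  have acases: "a = -2 \<or> a = 0 \<or> a = 2" using a_even arange a_ne4 a_nem4 by presburger
  have a0: "Cm u v = {}" if "a = 0" "u \<in> V" "v \<in> V" "sg u v = 1" for u v
  proof -
    have "\<forall>u\<in>V. \<forall>v\<in>V. sg u v = 1 \<longrightarrow> Cm u v = {} \<or> card (Cm u v) = 4"
    proof (intro ballI impI)
      fix u v assume u: "u \<in> V" and v: "v \<in> V" and e: "sg u v = 1"
      note q = pos_edge[OF u v e]
      have "card (Cm u v) = 0 \<or> card (Cm u v) = 4"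
      proof (cases "card (Spm u v) = 0")
        case True
        then have "card (Cm u v) = 0" using q \<open>a = 0\<close> by linarith
        then show ?thesis by simp
      next
        case False
        then have "card (Spm u v) \<ge> 1" by (simp add: Suc_le_eq card_gt_0_iff)
        then have "card (Cm u v) = 4" using q \<open>a = 0\<close> by linarith
        then show ?thesis by simp
      qed
      then show "Cm u v = {} \<or> card (Cm u v) = 4" by simp
    qed
    then show ?thesis using Lpos that by blast
  qed
  have a2: "Smp u v = {}" if "a = 2" "u \<in> V" "v \<in> V" "sg u v = 1" for u v
  proof -
    note q = pos_edge[OF that(2-4)]
    have "card (Smp u v) = 0" using q \<open>a = 2\<close> by linarith
    then show ?thesis by simp
  qed
  have am2: "Smm u v = {}" if "a = -2" "u \<in> V" "v \<in> V" "sg u v = 1" for u v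
  proof -
    note q = pos_edge[OF that(2-4)]
    have "card (Smm u v) = 0" using q \<open>a = -2\<close> by linarith
    then show ?thesis by simp
  qed
  have am2b: "card (Smp u v) = 1" if "a = -2" "u \<in> V" "v \<in> V" "sg u v = 1" for u v
  proof -
    note q = pos_edge[OF that(2-4)]
    show ?thesis using q \<open>a = -2\<close> by linarith
  qed
  have no_spp: "Spp u v = {}" if "a \<noteq> -2" "u \<in> V" "v \<in> V" "sg u v = -1" for u v
  proof (rule ccontr)
    note hyp = that
    assume "Spp u v \<noteq> {}"
    then obtain w where w: "w \<in> Spp u v" by blast
    then have wV: "w \<in> V" and uw: "sg u w = 1" and vw: "sg v w = 1" by (auto simp: Spp_def)
    have "v \<in> Smp u w" using hyp(3,4) vw sym[OF hyp(3) wV] by (simp add: Smp_def)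
    moreover have "v \<in> Cm u w" using hyp(3,4) vw sym[OF hyp(3) wV] by (simp add: Cm_def)
    ultimately show False using acases hyp(1) a0[OF _ hyp(2) wV uw] a2[OF _ hyp(2) wV uw] by auto
  qed
  have spm_ex: "\<exists>w\<in>V. sg u w = 1 \<and> v \<in> Smm u w \<and> v \<in> Cm u w"
    if "u \<in> V" "v \<in> V" "sg u v = -1" "Spm u v \<noteq> {}" for u v
  proof -
    note hyp = that
    obtain w where w: "w \<in> Spm u v" using hyp(4) by blast
    then have wV: "w \<in> V" and uw: "sg u w = 1" and vw: "sg v w = -1" by (auto simp: Spm_def)
    have "v \<in> Smm u w" using hyp(2,3) vw sym[OF hyp(2) wV] by (simp add: Smm_def)
    moreover have "v \<in> Cm u w" using hyp(2,3) vw sym[OF hyp(2) wV] by (simp add: Cm_def)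
    ultimately show ?thesis using wV uw by blast
  qed
  have bm2: "a = 2" if "b = -2"
  proof -
    have "card (Spm u0 m0) \<ge> 1" using ne that by linarith
    then have "Spm u0 m0 \<noteq> {}" by auto
    then obtain w where wV: "w \<in> V" and uw: "sg u0 w = 1" and sm: "m0 \<in> Smm u0 w" and cm: "m0 \<in> Cm u0 w"
      using spm_ex[OF u0 m0] by blast
    have "a \<noteq> 0" using a0[OF _ u0 wV uw] cm by auto
    moreover have "a \<noteq> -2" using am2[OF _ u0 wV uw] sm by auto
    ultimately show "a = 2" using acases by auto
  qed
  have b_ne3: "b \<noteq> 3"
  proof
    assume b3: "b = 3"
    have sppge: "card (Spp u v) \<ge> 2" if "u \<in> V" "v \<in> V" "sg u v = -1" for u v
      using neg_edge[OF that] b3 by linarith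
    have "Spp u0 m0 \<noteq> {}" using sppge[OF u0 m0] by auto
    then have am: "a = -2" using no_spp[OF _ u0 m0] by blast
    have e1: "(\<Sum>p\<in>Pn u0. card {m\<in>Mn u0. sg p m = 1}) = (\<Sum>m\<in>Mn u0. card {p\<in>Pn u0. sg p m = 1})"
      by (rule double_count) simp_all
    have "(\<Sum>p\<in>Pn u0. card {m\<in>Mn u0. sg p m = 1}) = (\<Sum>p\<in>Pn u0. 1)"
    proof (rule sum.cong)
      fix p assume p: "p \<in> Pn u0"
      then have pV: "p \<in> V" "sg u0 p = 1" by (auto simp: Pn_def)
      have "{m\<in>Mn u0. sg p m = 1} = Smp u0 p" by (auto simp: Mn_def Smp_def)
      then show "card {m\<in>Mn u0. sg p m = 1} = 1" using am2b[OF am u0 pV] by simp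
    qed simp
    then have l: "(\<Sum>p\<in>Pn u0. card {m\<in>Mn u0. sg p m = 1}) = 3" using card_PM(1)[OF u0] by simp
    have "(\<Sum>m\<in>Mn u0. (2::nat)) \<le> (\<Sum>m\<in>Mn u0. card {p\<in>Pn u0. sg p m = 1})"
    proof (rule sum_mono)
      fix m assume m: "m \<in> Mn u0"
      then have mV: "m \<in> V" "sg u0 m = -1" by (auto simp: Mn_def)
      have "{p\<in>Pn u0. sg p m = 1} = Spp u0 m" using sym[OF _ mV(1)] by (auto simp: Pn_def Spp_def)
      then show "2 \<le> card {p\<in>Pn u0. sg p m = 1}" using sppge[OF u0 mV] by simp
    qed
    then have "4 \<le> (\<Sum>m\<in>Mn u0. card {p\<in>Pn u0. sg p m = 1})" using card_PM(2)[OF u0] by simp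
    then show False using e1 l by simp
  qed
  have b_ne4: "b \<noteq> 4"
  proof
    assume b4: "b = 4"
    have "\<forall>u\<in>V. \<forall>v\<in>V. sg u v = -1 \<longrightarrow> card (Cm u v) = 4 \<and> card (Spp u v) = 3"
    proof (intro ballI impI)
      fix u v assume u: "u \<in> V" and v: "v \<in> V" and e: "sg u v = -1"
      note q = neg_edge[OF u v e]
      show "card (Cm u v) = 4 \<and> card (Spp u v) = 3" using q b4 by linarith
    qed
    then show False using Lneg4 by blast
  qed
  have c2: "a = 0 \<longrightarrow> (\<forall>u\<in>V. \<forall>v\<in>V. sg u v = 1 \<longrightarrow> \<not> (\<exists>w\<in>V. adj sg u w \<and> adj sg v w))"
  proof (intro impI ballI)
    fix u v assume "a = 0" "u \<in> V" "v \<in> V" "sg u v = 1"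
    then have "Cm u v = {}" using a0 by blast
    then show "\<not> (\<exists>w\<in>V. adj sg u w \<and> adj sg v w)" by (auto simp: Cm_def adj_def)
  qed
  have c3: "b = 0 \<longrightarrow> (\<forall>u\<in>V. \<forall>v\<in>V. sg u v = -1 \<longrightarrow> \<not> (\<exists>w\<in>V. adj sg u w \<and> adj sg v w))"
  proof (intro impI ballI)
    fix u v assume b0: "b = 0" and uv: "u \<in> V" "v \<in> V" "sg u v = -1"
    have "\<forall>u\<in>V. \<forall>v\<in>V. sg u v = -1 \<longrightarrow> Cm u v = {} \<or> (card (Cm u v) = 4 \<and> Smm u v = {})"
    proof (intro ballI impI)
      fix u v assume u: "u \<in> V" and v: "v \<in> V" and e: "sg u v = -1"
      note q = neg_edge[OF u v e]
      have "card (Cm u v) = 0 \<or> (card (Cm u v) = 4 \<and> card (Smm u v) = 0)"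
      proof (cases "card (Spm u v) = 0")
        case True
        then have "card (Cm u v) = 0" using q b0 by linarith
        then show ?thesis by simp
      next
        case False
        then have "card (Spm u v) \<ge> 1" by (simp add: Suc_le_eq card_gt_0_iff)
        then have "card (Cm u v) = 4 \<and> card (Smm u v) = 0" using q b0 by linarith
        then show ?thesis by simp
      qed
      then show "Cm u v = {} \<or> (card (Cm u v) = 4 \<and> Smm u v = {})" by simp
    qed
    then have "Cm u v = {}" using Lneg0 uv by blast
    then show "\<not> (\<exists>w\<in>V. adj sg u w \<and> adj sg v w)" by (auto simp: Cm_def adj_def)
  qed
  have c8: "(\<exists>u\<in>V. \<exists>v\<in>V. \<exists>w\<in>V. u \<noteq> v \<and> v \<noteq> w \<and> u \<noteq> w \<and>
          sg u v = -1 \<and> sg v w = -1 \<and> sg u v * sg v w * sg w u = 1) \<longrightarrow> b \<le> 0"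
  proof
    assume "\<exists>u\<in>V. \<exists>v\<in>V. \<exists>w\<in>V. u \<noteq> v \<and> v \<noteq> w \<and> u \<noteq> w \<and>
          sg u v = -1 \<and> sg v w = -1 \<and> sg u v * sg v w * sg w u = 1"
    then obtain u v w where u: "u \<in> V" and v: "v \<in> V" and w: "w \<in> V"
      and uv: "sg u v = -1" and vw: "sg v w = -1" and pr: "sg u v * sg v w * sg w u = 1" by blast
    have wu: "sg w u = 1" using uv vw pr by simp
    have "w \<in> Spm u v" using w wu vw sym[OF u w] by (simp add: Spm_def)
    then have "card (Spm u v) \<ge> 1" by (metis One_nat_def Suc_leI card_gt_0_iff empty_iff fins(6))
    then show "b \<le> 0" using neg_edge[OF u v uv] by linarith
  qed
  have c9: "(b = 2 \<or> b = -1) \<longrightarrow> a \<le> 0"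
  proof
    assume bb: "b = 2 \<or> b = -1"
    have "card (Spp u0 m0) \<ge> 1"
    proof (cases "card (Spm u0 m0) = 0")
      case True
      from bb show ?thesis
      proof
        assume "b = 2" then show ?thesis using ne True by linarith
      next
        assume "b = -1" then show ?thesis using ne True by linarith
      qed
    next
      case False
      then have z: "card (Spm u0 m0) \<ge> 1" by (simp add: Suc_le_eq card_gt_0_iff)
      from bb show ?thesis
      proof
        assume "b = 2" then show ?thesis using ne z by linarith
      next
        assume "b = -1" then show ?thesis using ne z by linarith
      qed
    qed
    then have "Spp u0 m0 \<noteq> {}" by auto
    then have "a = -2" using no_spp[OF _ u0 m0] by blast
    then show "a \<le> 0" by simp
  qed
  have c5: "a = -2 \<longrightarrow> b \<ge> -1" using bm2 brange by force
  show ?thesis using acases brange b_ne3 b_ne4 c2 c3 c5 c8 c9 bm2 by auto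
qed

end

theorem proposition3p4:
  fixes V :: "'a set" and sg :: "'a \<Rightarrow> 'a \<Rightarrow> int" and n :: nat and a b c :: int
  assumes srsg: "SRSG V sg n 5 a b c"
    and cls: "class_C1 V sg a b c \<or> class_C4 V sg a b c \<or> class_C5 V sg a b c"
    and conn: "connected_sg V sg"
    and noncomp: "\<not> complete V sg"
    and reg: "regular V sg 5"
    and netreg: "net_regular V sg 1"
  shows "a < 3
    \<and> (a = 0 \<longrightarrow> (\<forall>u\<in>V. \<forall>v\<in>V. sg u v = 1 \<longrightarrow>
                     \<not> (\<exists>w\<in>V. adj sg u w \<and> adj sg v w)))
    \<and> (b = 0 \<longrightarrow> (\<forall>u\<in>V. \<forall>v\<in>V. sg u v = -1 \<longrightarrow>
                     \<not> (\<exists>w\<in>V. adj sg u w \<and> adj sg v w)))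
    \<and> (a = -1 \<longrightarrow> b \<le> 0)
    \<and> (a = -2 \<longrightarrow> b \<ge> -1)
    \<and> a > -3
    \<and> (-2 \<le> b \<and> b < 3)
    \<and> ((\<exists>u\<in>V. \<exists>v\<in>V. \<exists>w\<in>V. u \<noteq> v \<and> v \<noteq> w \<and> u \<noteq> w \<and>
          sg u v = -1 \<and> sg v w = -1 \<and> sg u v * sg v w * sg w u = 1) \<longrightarrow> b \<le> 0)
    \<and> ((b = 2 \<or> b = -1) \<longrightarrow> a \<le> 0)
    \<and> (b = -2 \<longrightarrow> a \<ge> 1)"
proof -
  interpret srsg5 V sg n a b c
    by (rule srsg5.intro[OF srsg cls conn noncomp reg netreg])
  show ?thesis by (rule main)
qed

end
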